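(* Let $n,m\ge 1$ and let $f(x)=x^{nm}+\sum_{i=1}^{nm}c_i x^{nm-i}$ be an irreducible polynomial over $\mathrm{GF}(2)$ of degree $nm$ with $f(x)\neq x$, and let $e$ be its exponent (the least positive integer with $f(x)\mid x^e-1$), so that $2^{nm}-1=k\cdot e$ for a positive integer $k$. Suppose $e=(2^n-1)\ell$ with $\gcd(2^n-1,\ell)=1$, and write $r=2^n-1$. The $2^{nm}-1$ nonzero binary sequences satisfying $a_j=\sum_{i=1}^{nm}c_i a_{j-i}$ (mod 2) are periodic with least period $e$ and fall into exactly $k$ classes under cyclic shifts; choose one period $(s_0,s_1,\ldots,s_{e-1})$ of a representative of each class and fold it into the $r\times\ell$ array $A$ defined by $A_{\,i \bmod r,\ i \bmod \ell}=s_i$ for $0\le i\le e-1$ (well defined by the Chinese remainder theorem). For $0\le p<r$ and $0\le q<\ell$ let $$R_{p,q}=\{\,i\in\{0,\ldots,e-1\}:\ (i-p)\bmod r\in\{0,\ldots,n-1\},\ (i-q)\bmod \ell\in\{0,\ldots,m-1\}\,\},$$ the set of sequence positions folded into the cyclic $n\times m$ window with top-left corner $(p,q)$, and let $g_{R}(x)=\prod_{\emptyset\neq Q\subseteq R}\sum_{i\in Q}x^{i}$. If $f(x)$ does not divide $g_{R_{p,q}}(x)$ for every such $(p,q)$, then the $k$ folded arrays form a $(2^n-1,\ell;n,m)$-PRAC.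
   Context: All arrays are binary and cyclic (doubly periodic): an $n\times m$ window of an $r\times t$ array $A$ at position $(p,q)$ is the matrix with entries $A_{(p+u)\bmod r,\,(q+v)\bmod t}$, $0\le u<n$, $0\le v<m$. An $(r,t;n,m)$-PRAC (pseudo-random array code) is a set $\mathbb{C}$ of binary $r\times t$ cyclic arrays such that (i) every nonzero binary $n\times m$ matrix appears exactly once as a window in one of the arrays of $\mathbb{C}$ (i.e., there is exactly one pair consisting of an array of $\mathbb{C}$ and a window position at which it appears), and (ii) the shift-and-add property holds: if $\mathcal{A},\mathcal{A}'\in\mathbb{C}$ are distinct, or if $\mathcal{A}\in\mathbb{C}$ and $\mathcal{A}'$ is a nontrivial cyclic (horizontal and/or vertical) shift of $\mathcal{A}$, then the entrywise mod-2 sum $\mathcal{A}+\mathcal{A}'$ is, up to a cyclic shift, an array of $\mathbb{C}$. *)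

theory Defs
  imports "HOL-Library.Z2" "HOL-Computational_Algebra.Polynomial_Factorial"
begin

text \<open>GF(2) is the type bit. Binary arrays of size r x t are represented as functions
  nat => nat => bit that vanish outside the index box {0..<r} x {0..<t}.\<close>

definition is_array :: "nat \<Rightarrow> nat \<Rightarrow> (nat \<Rightarrow> nat \<Rightarrow> bit) \<Rightarrow> bool" where
  "is_array r t A \<longleftrightarrow> (\<forall>i j. \<not> (i < r \<and> j < t) \<longrightarrow> A i j = 0)"

definition window :: "nat \<Rightarrow> nat \<Rightarrow> nat \<Rightarrow> nat \<Rightarrow> (nat \<Rightarrow> nat \<Rightarrow> bit) \<Rightarrow> nat \<Rightarrow> nat
    \<Rightarrow> (nat \<Rightarrow> nat \<Rightarrow> bit)" where
  "window r t n m A p q = (\<lambda>u v. if u < n \<and> v < m then A ((p + u) mod r) ((q + v) mod t) else 0)"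

definition shift_arr :: "nat \<Rightarrow> nat \<Rightarrow> nat \<Rightarrow> nat \<Rightarrow> (nat \<Rightarrow> nat \<Rightarrow> bit) \<Rightarrow> (nat \<Rightarrow> nat \<Rightarrow> bit)" where
  "shift_arr r t a b A = (\<lambda>i j. if i < r \<and> j < t then A ((i + a) mod r) ((j + b) mod t) else 0)"

definition add_arr :: "(nat \<Rightarrow> nat \<Rightarrow> bit) \<Rightarrow> (nat \<Rightarrow> nat \<Rightarrow> bit) \<Rightarrow> (nat \<Rightarrow> nat \<Rightarrow> bit)" where
  "add_arr A B = (\<lambda>i j. A i j + B i j)"

definition is_PRAC :: "nat \<Rightarrow> nat \<Rightarrow> nat \<Rightarrow> nat \<Rightarrow> (nat \<Rightarrow> nat \<Rightarrow> bit) set \<Rightarrow> bool" where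
  "is_PRAC r t n m C \<longleftrightarrow>
     (\<forall>A\<in>C. is_array r t A) \<and>
     (\<forall>M. is_array n m M \<and> M \<noteq> (\<lambda>_ _. 0) \<longrightarrow>
        card {(A, p, q). A \<in> C \<and> p < r \<and> q < t \<and> window r t n m A p q = M} = 1) \<and>
     (\<forall>A\<in>C. \<forall>A'\<in>C. A \<noteq> A' \<longrightarrow>
        (\<exists>B\<in>C. \<exists>a<r. \<exists>b<t. add_arr A A' = shift_arr r t a b B)) \<and>
     (\<forall>A\<in>C. \<forall>a<r. \<forall>b<t. (a, b) \<noteq> (0, 0) \<longrightarrow>
        (\<exists>B\<in>C. \<exists>c<r. \<exists>d<t. add_arr A (shift_arr r t a b A) = shift_arr r t c d B))"

definition poly_exponent :: "bit poly \<Rightarrow> nat" where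
  "poly_exponent f = (LEAST e. 0 < e \<and> f dvd (monom 1 e - 1))"

text \<open>Binary sequences satisfying the linear recurrence of the monic polynomial f of degree N:
  a_j = sum_{i=1}^N c_i a_{j-i} where f = x^N + sum c_i x^(N-i), i.e. c_i = coeff f (N - i).\<close>
definition lfsr_seq :: "bit poly \<Rightarrow> (nat \<Rightarrow> bit) \<Rightarrow> bool" where
  "lfsr_seq f s \<longleftrightarrow> (\<forall>j \<ge> degree f.
      s j = (\<Sum>i = 1..degree f. coeff f (degree f - i) * s (j - i)))"

definition shift_seq :: "nat \<Rightarrow> (nat \<Rightarrow> bit) \<Rightarrow> (nat \<Rightarrow> bit)" where
  "shift_seq d s = (\<lambda>j. s (j + d))"

definition fold_arr :: "nat \<Rightarrow> nat \<Rightarrow> (nat \<Rightarrow> bit) \<Rightarrow> (nat \<Rightarrow> nat \<Rightarrow> bit)" where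
  "fold_arr r l s = (\<lambda>a b. if a < r \<and> b < l
      then s (THE i. i < r * l \<and> i mod r = a \<and> i mod l = b) else 0)"

definition window_positions :: "nat \<Rightarrow> nat \<Rightarrow> nat \<Rightarrow> nat \<Rightarrow> nat \<Rightarrow> nat \<Rightarrow> nat set" where
  "window_positions r l n m p q =
     {i. i < r * l \<and> (int i - int p) mod int r < int n \<and> (int i - int q) mod int l < int m}"

definition g_poly :: "nat set \<Rightarrow> bit poly" where
  "g_poly R = (\<Prod>Q\<in>{Q. Q \<subseteq> R \<and> Q \<noteq> {}}. \<Sum>i\<in>Q. monom 1 i)"

end

theory Submission
  imports Defs Berlekamp_Zassenhaus.Distinct_Degree_Factorization "HOL-Number_Theory.Residues"
begin

hide_const (open) Unique_Factorization.comm_monoid_mult_class.coprime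


type_synonym B = "bool mod_ring"

lemma B_cases: "(x::B) = 0 \<or> x = 1"
proof -
  obtain i where "i < 2" "x = of_nat i" using surj_of_nat_mod_ring[of x] by auto
  then show ?thesis by (cases i; auto; rename_tac j; case_tac j; auto)
qed

lemma B_11: "(1::B) + 1 = 0"
  using of_nat_card_eq_0[where 'a=bool] by simp

definition phi :: "bit \<Rightarrow> B" where "phi b = (if b = 0 then 0 else 1)"
definition psi :: "B \<Rightarrow> bit" where "psi b = (if b = 0 then 0 else 1)"

lemma bit_cases2: "(x::bit) = 0 \<or> x = 1" by auto

interpretation phi: comm_ring_hom phi
  apply unfold_locales
  using B_11 bit_cases2 B_cases by (auto simp: phi_def)

interpretation psi: comm_ring_hom psi
  apply unfold_locales
  using B_11 bit_cases2 B_cases apply (auto simp: psi_def)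
  by (metis B_11 B_cases)

interpretation mphi: map_poly_comm_ring_hom phi ..
interpretation mpsi: map_poly_comm_ring_hom psi ..

lemma psi_phi: "map_poly psi (map_poly phi p) = p"
  by (subst map_poly_map_poly) (auto simp: psi_def phi_def o_def intro!: map_poly_idI)

lemma phi_psi: "map_poly phi (map_poly psi p) = p"
  apply (subst map_poly_map_poly) apply (simp add: phi_def)
  apply (rule map_poly_idI) using B_cases by (auto simp: psi_def phi_def)

lemma deg_phi: "degree (map_poly phi p) = degree p"
  by (metis degree_map_poly_le psi_phi le_antisym)

lemma unit_transfer: "map_poly psi a dvd 1 \<Longrightarrow> a dvd 1"
  by (metis mphi.hom_dvd_1 phi_psi)

lemma irr_phi: assumes "irreducible (f::bit poly)" shows "irreducible (map_poly phi f)"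
proof (rule irreducibleI)
  show "map_poly phi f \<noteq> 0" using assms by (metis irreducible_def mphi.hom_zero psi_phi)
  show "\<not> map_poly phi f dvd 1" using assms by (metis irreducible_def mpsi.hom_dvd_1 psi_phi)
  fix a b assume "map_poly phi f = a * b"
  hence "f = map_poly psi a * map_poly psi b" by (metis mpsi.hom_mult psi_phi)
  hence "map_poly psi a dvd 1 \<or> map_poly psi b dvd 1" using irreducibleD[OF assms] by blast
  then show "a dvd 1 \<or> b dvd 1" using unit_transfer by blast
qed

lemma X_phi: "map_poly phi (monom 1 1 ^ k - monom 1 1) = monom 1 1 ^ k - monom 1 1"
  by (simp add: mphi.hom_power mphi.hom_minus phi_def)

lemma F1: assumes "irreducible (f::bit poly)" shows "f dvd monom 1 1 ^ (2 ^ degree f) - monom 1 1"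
proof -
  have "map_poly phi f dvd monom 1 1 ^ (CARD(bool) ^ degree (map_poly phi f)) - monom 1 1"
    using degree_divisor(1)[OF irr_phi[OF assms] refl] .
  hence "map_poly phi f dvd map_poly phi (monom 1 1 ^ (2 ^ degree f) - monom 1 1)"
    by (simp only: X_phi deg_phi) simp
  from mpsi.hom_dvd[OF this] show ?thesis by (simp only: psi_phi)
qed

lemma F2: assumes "irreducible (f::bit poly)" "1 \<le> c" "c < degree f"
  shows "\<not> f dvd monom 1 1 ^ (2 ^ c) - monom 1 1"
proof
  assume "f dvd monom 1 1 ^ (2 ^ c) - monom 1 1"
  from mphi.hom_dvd[OF this] have "map_poly phi f dvd monom 1 1 ^ (CARD(bool) ^ c) - monom 1 1"
    by (simp only: X_phi) simp
  with degree_divisor(2)[OF irr_phi[OF assms(1)] refl, of c] assms show False by (simp add: deg_phi)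
qed


lemma bit_add_self[simp]: "(x::bit) + x = 0"
  using bit_cases2[of x] by auto

lemma bpoly_add_self[simp]: "(p::bit poly) + p = 0"
  by (rule poly_eqI) (simp only: coeff_add bit_add_self coeff_0)

lemma bpoly_uminus[simp]: "- (p::bit poly) = p"
  by (metis add_eq_0_iff bpoly_add_self)

lemma bpoly_minus: "(p::bit poly) - q = p + q"
  by (metis bpoly_uminus diff_conv_add_uminus)

definition Lf :: "bit poly \<Rightarrow> bit poly \<Rightarrow> bit" where
  "Lf f g = coeff (g mod f) (degree f - 1)"

definition sq :: "bit poly \<Rightarrow> bit poly \<Rightarrow> nat \<Rightarrow> bit" where
  "sq f h j = Lf f (h * monom 1 j)"

lemma Lf_add: "Lf f (a + b) = Lf f a + Lf f b"
  by (simp add: Lf_def poly_mod_add_left)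

lemma Lf_smult: "Lf f (Polynomial.smult c a) = c * Lf f a"
  by (simp add: Lf_def mod_smult_left)

lemma Lf_sum: "Lf f (\<Sum>i\<in>A. g i) = (\<Sum>i\<in>A. Lf f (g i))"
  by (induction A rule: infinite_finite_induct) (simp_all add: Lf_add, simp_all add: Lf_def)

lemma Lf_mod: "Lf f (g mod f) = Lf f g"
  by (simp add: Lf_def)

lemma Lf_cong: assumes "f dvd a - b" shows "Lf f a = Lf f b"
proof -
  have "a mod f = b mod f" using assms mod_eq_dvd_iff by blast
  thus ?thesis by (simp add: Lf_def)
qed

lemma Lf_zero_dvd: "f dvd a \<Longrightarrow> Lf f a = 0"
  by (simp add: Lf_def)

lemma sq_add: "sq f (a + b) j = sq f a j + sq f b j"
  by (simp add: sq_def distrib_right Lf_add)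

lemma sq_shift: "sq f h (j + d) = sq f (h * monom 1 d) j"
  by (simp add: sq_def mult.assoc mult_monom add.commute)

lemma sq_cong: "f dvd a - b \<Longrightarrow> sq f a = sq f b"
  unfolding sq_def
  by (rule ext, rule Lf_cong) (metis dvd_mult2 left_diff_distrib)

lemma sq_dvd: "f dvd h \<Longrightarrow> sq f h j = 0"
  by (simp add: sq_def Lf_zero_dvd)

lemma sq_period: assumes "f dvd monom 1 e - 1" shows "sq f h (j + e) = sq f h j"
proof -
  have "f dvd h * monom 1 j * (monom 1 e - 1)" using assms by simp
  hence "f dvd h * monom 1 (j + e) - h * monom 1 j"
    by (simp add: algebra_simps mult_monom)
  thus ?thesis unfolding sq_def by (rule Lf_cong)
qed

lemma sq_period_mod: assumes "f dvd monom 1 e - 1" shows "sq f h (j mod e) = sq f h j"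
proof -
  have "sq f h (x + e * k) = sq f h x" for k x
  proof (induction k)
    case (Suc k)
    have "x + e * Suc k = (x + e * k) + e" by simp
    thus ?case using Suc sq_period[OF assms, of h "x + e * k"] by (simp only:)
  qed simp
  thus ?thesis by (metis mod_mult_div_eq)
qed

lemma monom_smult1: "monom (c::bit) n = Polynomial.smult c (monom 1 n)"
  by (simp add: smult_monom)

lemma mult_monom_smult: "h * monom (c::bit) n = Polynomial.smult c (h * monom 1 n)"
  by (subst monom_smult1) simp

lemma Lf_all_monom: assumes "\<forall>j. Lf f (h * monom 1 j) = 0" shows "Lf f (h * g) = 0"
proof -
  have "h * g = h * (\<Sum>i\<le>degree g. monom (coeff g i) i)" by (simp add: poly_as_sum_of_monoms)
  also have "\<dots> = (\<Sum>i\<le>degree g. Polynomial.smult (coeff g i) (h * monom 1 i))"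
    unfolding sum_distrib_left by (rule sum.cong[OF refl]) (rule mult_monom_smult)
  finally show ?thesis using assms by (simp add: Lf_sum Lf_smult)
qed

lemma univ_bit: "(UNIV::bit set) = {0,1}" using bit_cases2 by auto

lemma K0_bij: assumes "N \<ge> 1"
  shows "bij_betw Poly {xs. set xs \<subseteq> (UNIV::bit set) \<and> length xs = N} {g::bit poly. degree g < N}"
proof (rule bij_betw_imageI)
  show "inj_on Poly {xs. set xs \<subseteq> (UNIV::bit set) \<and> length xs = N}"
  proof (rule inj_onI)
    fix xs ys :: "bit list" assume xs: "xs \<in> {xs. set xs \<subseteq> UNIV \<and> length xs = N}"
      and ys: "ys \<in> {xs. set xs \<subseteq> UNIV \<and> length xs = N}" and eq: "Poly xs = Poly ys"
    have "nth_default 0 xs i = nth_default 0 ys i" for i using eq by (metis coeff_Poly_eq)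
    have "xs ! i = ys ! i" if "i < length xs" for i
      using that xs ys \<open>nth_default 0 xs i = nth_default 0 ys i\<close> by (simp add: nth_default_nth)
    then show "xs = ys" using xs ys by (intro nth_equalityI) auto
  qed
  show "Poly ` {xs. set xs \<subseteq> (UNIV::bit set) \<and> length xs = N} = {g::bit poly. degree g < N}"
  proof (intro equalityI subsetI)
    fix g assume "g \<in> Poly ` {xs. set xs \<subseteq> (UNIV::bit set) \<and> length xs = N}"
    then obtain xs where g: "g = Poly xs" and len: "length xs = N" by auto
    have "degree g \<le> N - 1"
      by (rule degree_le) (auto simp: g nth_default_def len)
    thus "g \<in> {g. degree g < N}" using assms by auto
  next
    fix g :: "bit poly" assume "g \<in> {g. degree g < N}"
    hence dg: "degree g < N" by simp
    have "length (coeffs g) \<le> N" using dg by (cases "g = 0") (auto simp: length_coeffs_degree)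
    hence "length (coeffs g @ replicate (N - length (coeffs g)) 0) = N" by simp
    moreover have "Poly (coeffs g @ replicate (N - length (coeffs g)) 0) = g" by simp
    ultimately show "g \<in> Poly ` {xs. set xs \<subseteq> (UNIV::bit set) \<and> length xs = N}"
      by (metis (mono_tags, lifting) image_eqI mem_Collect_eq top_greatest)
  qed
qed



lemma card_K0: assumes "N \<ge> 1" shows "card {g::bit poly. degree g < N} = 2 ^ N"
  and "finite {g::bit poly. degree g < N}"
proof -
  have cu: "card (UNIV::bit set) = 2" by (simp add: univ_bit)
  have fu: "finite (UNIV::bit set)" by (simp add: univ_bit)
  show "card {g::bit poly. degree g < N} = 2 ^ N"
    using bij_betw_same_card[OF K0_bij[OF assms]] card_lists_length_eq[OF fu, of N] cu by simp
  show "finite {g::bit poly. degree g < N}"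
    using bij_betw_finite[OF K0_bij[OF assms]] finite_lists_length_eq[OF fu, of N] by simp
qed

lemma mod_in_K0: assumes "degree (f::bit poly) \<ge> 1" shows "degree (a mod f) < degree f"
  using assms by (cases "a mod f = 0") (auto intro: degree_mod_less')

lemma K0_dvd_eq: assumes "degree (a::bit poly) < degree f" "degree b < degree f" "f dvd a - b"
  shows "a = b"
proof (rule ccontr)
  assume "a \<noteq> b"
  hence "a - b \<noteq> 0" by simp
  from dvd_imp_degree_le[OF assms(3) this] have "degree f \<le> degree (a - b)" .
  moreover have "degree (a - b) \<le> max (degree a) (degree b)" by (rule degree_diff_le_max)
  ultimately show False using assms by simp
qed



lemma mult_surj: assumes pr: "prime_elem (f::bit poly)" and deg: "degree f \<ge> 1"
  and nd: "\<not> f dvd h" shows "\<exists>g. f dvd h * g - c"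
proof -
  let ?K = "{g::bit poly. degree g < degree f}"
  let ?F = "\<lambda>g. (h * g) mod f"
  have fin: "finite ?K" using card_K0(2)[OF deg] .
  have sub: "?F ` ?K \<subseteq> ?K"
  proof (rule image_subsetI)
    fix g show "?F g \<in> ?K" using mod_in_K0[OF deg, of "h * g"] by simp
  qed
  have inj: "inj_on ?F ?K"
  proof (rule inj_onI)
    fix a b assume a: "a \<in> ?K" and b: "b \<in> ?K" and eq: "?F a = ?F b"
    hence "f dvd h * a - h * b" using mod_eq_dvd_iff by blast
    hence "f dvd h * (a - b)" by (simp add: right_diff_distrib)
    hence "f dvd a - b" using prime_elem_dvd_multD[OF pr] nd by blast
    thus "a = b" using a b K0_dvd_eq by auto
  qed
  have "?F ` ?K = ?K" by (rule endo_inj_surj[OF fin sub inj])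
  moreover have "c mod f \<in> ?K" using mod_in_K0[OF deg, of c] by simp
  ultimately have "c mod f \<in> ?F ` ?K" by simp
  then obtain g where "c mod f = (h * g) mod f" by blast
  thus ?thesis using mod_eq_dvd_iff by metis
qed

lemma Lf_all_dvd: assumes irr: "irreducible f" and deg: "degree f \<ge> 1"
  and all: "\<And>g. Lf f (h * g) = 0" shows "f dvd h"
proof (rule ccontr)
  assume nd: "\<not> f dvd h"
  have pr: "prime_elem f" using irr by (simp add: field_poly_irreducible_imp_prime)
  obtain g where "f dvd h * g - monom 1 (degree f - 1)" using mult_surj[OF pr deg nd] by blast
  hence "Lf f (h * g) = Lf f (monom 1 (degree f - 1))"
    by (rule Lf_cong)
  also have "\<dots> = 1" unfolding Lf_def using deg
    by (subst mod_poly_less) (auto simp: degree_monom_eq)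
  finally show False using all by simp
qed


lemma f_monic_split: assumes "degree (f::bit poly) \<ge> 1"
  shows "f = monom 1 (degree f) + (\<Sum>k<degree f. monom (coeff f k) k)"
proof -
  have lc: "coeff f (degree f) = 1" using assms by (metis bit_not_zero_iff degree_0 leading_coeff_0_iff not_one_le_zero)
  have "f = (\<Sum>k\<le>degree f. monom (coeff f k) k)" by (simp add: poly_as_sum_of_monoms)
  also have "\<dots> = (\<Sum>k<Suc (degree f). monom (coeff f k) k)" by (simp add: lessThan_Suc_atMost)
  also have "\<dots> = monom 1 (degree f) + (\<Sum>k<degree f. monom (coeff f k) k)"
    by (simp add: lc)
  finally show ?thesis .
qed

lemma lfsr_sq: assumes deg: "degree (f::bit poly) \<ge> 1" shows "lfsr_seq f (sq f h)"
  unfolding lfsr_seq_def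
proof (intro allI impI)
  fix j assume j: "degree f \<le> j"
  let ?N = "degree f"
  let ?S = "\<Sum>k<?N. monom (coeff f k) k"
  have "f dvd monom 1 ?N - ?S" unfolding bpoly_minus by (subst f_monic_split[OF deg, symmetric]) simp
  hence d1: "f dvd h * monom 1 (j - ?N) * (monom 1 ?N - ?S)" by (rule dvd_mult)
  have e1: "h * monom 1 (j - ?N) * monom 1 ?N = h * monom 1 j"
    using j by (simp add: mult.assoc mult_monom)
  have "h * monom 1 (j - ?N) * (monom 1 ?N - ?S) = h * monom 1 j - h * monom 1 (j - ?N) * ?S"
    by (simp only: right_diff_distrib e1)
  with d1 have "f dvd h * monom 1 j - h * monom 1 (j - ?N) * ?S" by simp
  hence "sq f h j = Lf f (h * monom 1 (j - ?N) * ?S)" unfolding sq_def by (rule Lf_cong)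
  also have "h * monom 1 (j - ?N) * ?S = (\<Sum>k<?N. Polynomial.smult (coeff f k) (h * monom 1 (j - ?N + k)))"
    unfolding sum_distrib_left
    by (rule sum.cong[OF refl], subst mult_monom_smult[of "h * monom 1 (j - ?N)" "coeff f k" k for k])
      (simp add: mult.assoc mult_monom)
  also have "Lf f \<dots> = (\<Sum>k<?N. coeff f k * sq f h (j - ?N + k))"
    by (simp add: Lf_sum Lf_smult sq_def)
  also have "\<dots> = (\<Sum>i = 1..?N. coeff f (?N - i) * sq f h (j - i))"
  proof (rule sum.reindex_bij_witness[of _ "\<lambda>i. ?N - i" "\<lambda>k. ?N - k"])
    fix k assume k: "k \<in> {..<?N}"
    thus "?N - k \<in> {1..?N}" "?N - (?N - k) = k" by auto
    have "j - (?N - k) = j - ?N + k" using k j by auto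
    thus "coeff f (?N - (?N - k)) * sq f h (j - (?N - k)) = coeff f k * sq f h (j - ?N + k)"
      using k by simp
  next
    fix i assume "i \<in> {1..?N}" thus "?N - i \<in> {..<?N}" "?N - (?N - i) = i" by auto
  qed
  finally show "sq f h j = (\<Sum>i = 1..?N. coeff f (?N - i) * sq f h (j - i))" .
qed



lemma lfsr_det: assumes "lfsr_seq f s" "lfsr_seq f t" "\<And>i. i < degree f \<Longrightarrow> s i = t i"
  shows "s = t"
proof
  fix j show "s j = t j"
  proof (induction j rule: less_induct)
    case (less j)
    show ?case
    proof (cases "j < degree f")
      case True thus ?thesis using assms(3) by simp
    next
      case False
      have "s j = (\<Sum>i = 1..degree f. coeff f (degree f - i) * s (j - i))"
        using assms(1) False unfolding lfsr_seq_def by simp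
      also have "\<dots> = (\<Sum>i = 1..degree f. coeff f (degree f - i) * t (j - i))"
        by (rule sum.cong[OF refl]) (use less False in auto)
      also have "\<dots> = t j" using assms(2) False unfolding lfsr_seq_def by simp
      finally show ?thesis .
    qed
  qed
qed

definition enc :: "nat \<Rightarrow> (nat \<Rightarrow> bit) \<Rightarrow> bit poly" where
  "enc N s = (\<Sum>i<N. monom (s i) i)"

lemma coeff_enc: "coeff (enc N s) i = (if i < N then s i else 0)"
  by (simp add: enc_def coeff_sum)

lemma degree_enc: assumes "N \<ge> 1" shows "degree (enc N s) < N"
proof -
  have "degree (enc N s) \<le> N - 1" by (rule degree_le) (auto simp: coeff_enc)
  thus ?thesis using assms by simp
qed

lemma V_finite_card: assumes "degree (f::bit poly) \<ge> 1"
  shows "finite {s. lfsr_seq f s}" "card {s. lfsr_seq f s} \<le> 2 ^ degree f"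
proof -
  let ?V = "{s. lfsr_seq f s}" and ?K = "{g::bit poly. degree g < degree f}"
  have inj: "inj_on (enc (degree f)) ?V"
  proof (rule inj_onI)
    fix s t assume "s \<in> ?V" "t \<in> ?V" "enc (degree f) s = enc (degree f) t"
    hence "\<And>i. i < degree f \<Longrightarrow> s i = t i" by (metis coeff_enc)
    thus "s = t" using \<open>s \<in> ?V\<close> \<open>t \<in> ?V\<close> lfsr_det by auto
  qed
  have sub: "enc (degree f) ` ?V \<subseteq> ?K" using degree_enc[OF assms] by auto
  show fin: "finite ?V" using inj sub card_K0(2)[OF assms] finite_imageD finite_subset by blast
  have "card ?V = card (enc (degree f) ` ?V)" using card_image[OF inj] by simp
  also have "\<dots> \<le> card ?K" by (rule card_mono[OF card_K0(2)[OF assms] sub])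
  finally show "card ?V \<le> 2 ^ degree f" using card_K0(1)[OF assms] by simp
qed

lemma sq_zero_dvd: assumes irr: "irreducible f" and deg: "degree f \<ge> 1"
  and z: "\<And>j. sq f h j = 0" shows "f dvd h"
  by (rule Lf_all_dvd[OF irr deg]) (rule Lf_all_monom, use z in \<open>simp add: sq_def\<close>)

lemma sq_inj: assumes irr: "irreducible f" and deg: "degree f \<ge> 1"
  and eq: "sq f a = sq f b" shows "f dvd a - b"
proof -
  have "sq f (a + b) j = 0" for j by (simp add: sq_add eq)
  hence "f dvd a + b" using sq_zero_dvd[OF irr deg] by blast
  thus ?thesis by (simp add: bpoly_minus)
qed

lemma V_repr: assumes irr: "irreducible f" and deg: "degree f \<ge> 1" and s: "lfsr_seq f s"
  shows "\<exists>h. degree h < degree f \<and> s = sq f h"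
proof -
  let ?V = "{s. lfsr_seq f s}" and ?K = "{g::bit poly. degree g < degree f}"
  have inj: "inj_on (sq f) ?K"
    by (rule inj_onI) (use sq_inj[OF irr deg] K0_dvd_eq in auto)
  have sub: "sq f ` ?K \<subseteq> ?V" using lfsr_sq[OF deg] by auto
  have "card (sq f ` ?K) = 2 ^ degree f" using card_image[OF inj] card_K0(1)[OF deg] by simp
  hence "sq f ` ?K = ?V" using card_subset_eq[OF V_finite_card(1)[OF deg] sub] V_finite_card(2)[OF deg]
      card_mono[OF V_finite_card(1)[OF deg] sub] by simp
  thus ?thesis using s by auto
qed


locale prac_setup =
  fixes n m l :: nat and f :: "bit poly" and r :: nat
  assumes rdef: "r = 2 ^ n - 1" and n1: "n \<ge> 1" and m1: "m \<ge> 1" and irr: "irreducible f" and degf: "degree f = n * m"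
    and fX: "f \<noteq> [:0, 1:]" and expo: "poly_exponent f = r * l"
    and cop: "coprime r l"
begin

abbreviation "e \<equiv> poly_exponent f"
abbreviation "N \<equiv> degree f"

lemma N1: "N \<ge> 1" using n1 m1 degf by simp

lemma pr: "prime_elem f" using irr by (simp add: field_poly_irreducible_imp_prime)

lemma pow2_ge: "k \<ge> 1 \<Longrightarrow> (2::nat) ^ k \<ge> 2"
  using power_increasing[of 1 k "2::nat"] by simp

lemma r_pos: "r \<ge> 1" using pow2_ge[OF n1] rdef by simp

lemma n_le_r: "n \<le> r"
proof -
  have "n < 2 ^ n" by (rule less_exp)
  thus ?thesis using rdef by arith
qed

lemma not_dvd_X: "\<not> f dvd monom 1 1"
proof
  assume "f dvd monom 1 1"
  then obtain c where c: "monom 1 1 = f * c" by (elim dvdE)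
  have c0: "c \<noteq> 0" using c by auto
  have f0: "f \<noteq> 0" using N1 by auto
  have "1 = N + degree c" using c c0 f0 by (metis degree_mult_eq degree_monom_eq one_neq_zero)
  hence "degree c = 0" "N = 1" using N1 by auto
  then obtain a where a: "c = [:a:]" by (metis degree_eq_zeroE)
  hence "a = 1" using c0 bit_cases2 by auto
  hence "f = monom 1 1" using c a by simp
  thus False using fX x_as_monom by metis
qed

lemma not_dvd_Xpow: "\<not> f dvd monom 1 k * g" if "\<not> f dvd g"
proof
  assume "f dvd monom 1 k * g"
  moreover have "monom 1 k = (monom 1 1 :: bit poly) ^ k" by (rule x_pow_n[symmetric])
  ultimately have "f dvd monom 1 1 ^ k \<or> f dvd g" using prime_elem_dvd_multD[OF pr] by metis
  thus False using that not_dvd_X prime_elem_dvd_power[OF pr] by blast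
qed

lemma Xmul: "monom 1 1 * (monom 1 k - 1) = monom 1 (Suc k) - (monom 1 1 :: bit poly)"
  by (simp add: right_diff_distrib mult_monom)

lemma exists_exp: "\<exists>d. 0 < d \<and> f dvd monom 1 d - 1"
proof -
  have "f dvd monom 1 1 ^ (2 ^ N) - monom 1 1" by (rule F1[OF irr])
  moreover have "(2::nat) ^ N = Suc (2 ^ N - 1)" by simp
  ultimately have "f dvd monom 1 1 * (monom 1 (2 ^ N - 1) - 1)"
    by (metis Xmul x_pow_n)
  hence "f dvd monom 1 (2 ^ N - 1) - 1" using prime_elem_dvd_multD[OF pr] not_dvd_X by blast
  moreover have "0 < (2::nat) ^ N - 1" using pow2_ge[OF N1] by simp
  ultimately show ?thesis by blast
qed

lemma e_props: "0 < e" "f dvd monom 1 e - 1"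
  using LeastI_ex[OF exists_exp] unfolding poly_exponent_def by auto

lemma e_min: "0 < d \<Longrightarrow> d < e \<Longrightarrow> \<not> f dvd monom 1 d - 1"
  unfolding poly_exponent_def using not_less_Least by blast

lemma l_pos: "l > 0" using e_props(1) expo by (metis mult_0_right neq0_conv)

lemma e_eq: "e = r * l" using expo by simp

lemma dvd_mult_e: "f dvd monom 1 (e * q) - 1"
proof -
  have "monom 1 e mod f = 1 mod f" using e_props(2) mod_eq_dvd_iff by blast
  hence "(monom 1 e) ^ q mod f = 1 ^ q mod f" by (metis power_mod)
  moreover have "(monom 1 e) ^ q = (monom 1 (e * q) :: bit poly)" by (simp add: monom_power)
  ultimately show ?thesis using mod_eq_dvd_iff by (metis power_one)
qed

lemma sq_bpoly: "((a::bit poly) + 1) ^ 2 = a ^ 2 + 1"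
proof -
  have two0: "(2::bit poly) = 0" by (metis bpoly_add_self one_add_one)
  show ?thesis by (simp add: power2_eq_square algebra_simps two0)
qed

lemma l_odd: "odd l"
proof
  assume "even l"
  then obtain l' where l': "l = 2 * l'" by (elim evenE)
  have "f dvd monom 1 (r * l' * 2) - 1" using e_props(2) e_eq l' by (simp add: ac_simps)
  moreover have "monom 1 (r * l' * 2) - 1 = (monom 1 (r * l') - (1::bit poly)) ^ 2"
    by (simp add: bpoly_minus sq_bpoly monom_power)
  ultimately have "f dvd monom 1 (r * l') - 1" using prime_elem_dvd_power[OF pr] by metis
  moreover have "0 < r * l'" using l_pos l' r_pos by auto
  moreover have "r * l' < e" using e_eq l' \<open>0 < r * l'\<close> by simp
  ultimately show False using e_min by blast
qed

lemma m_le_l: "m \<le> l"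
proof -
  define J where "J = n * totient l"
  have J1: "J \<ge> 1" using n1 l_pos by (simp add: J_def Suc_leI)
  have "coprime (2::nat) l" using l_odd by simp
  hence "[2 ^ totient l = 1] (mod l)" by (rule euler_theorem)
  hence "[(2 ^ totient l) ^ n = 1 ^ n] (mod l)" by (rule cong_pow)
  moreover have "(2::nat) ^ J = (2 ^ totient l) ^ n" by (metis J_def power_mult mult.commute)
  ultimately have cl: "[2 ^ J = 1] (mod l)" by simp
  have "[2 ^ n = 1] (mod r)" using cong_altdef_nat[of 1 "2 ^ n" r] rdef by simp
  hence "[(2 ^ n) ^ totient l = 1 ^ totient l] (mod r)" by (rule cong_pow)
  moreover have "(2::nat) ^ J = (2 ^ n) ^ totient l" by (metis J_def power_mult)
  ultimately have cr: "[2 ^ J = 1] (mod r)" by simp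
  have "[2 ^ J = 1] (mod r * l)" by (rule coprime_cong_mult_nat[OF cr cl cop])
  hence "r * l dvd 2 ^ J - 1" using cong_altdef_nat[of 1 "2 ^ J"] by simp
  then obtain q where q: "2 ^ J - 1 = e * q" using e_eq by (metis dvdE)
  have "f dvd monom 1 (2 ^ J - 1) - 1" using dvd_mult_e[of q] q by simp
  hence "f dvd monom 1 1 * (monom 1 (2 ^ J - 1) - 1)" by simp
  moreover have "(2::nat) ^ J = Suc (2 ^ J - 1)" by simp
  ultimately have "f dvd monom 1 1 ^ (2 ^ J) - monom 1 1" by (metis Xmul x_pow_n)
  hence "\<not> J < N" using F2[OF irr J1] by blast
  hence "m \<le> totient l" using degf J_def n1 by (auto simp: not_less)
  thus ?thesis using totient_le order_trans by blast
qed

end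


context prac_setup
begin

definition crt :: "nat \<Rightarrow> nat \<Rightarrow> nat" where
  "crt a b = (THE i. i < r * l \<and> i mod r = a \<and> i mod l = b)"

lemma crt_ex1: assumes "a < r" "b < l" shows "\<exists>!i. i < r * l \<and> i mod r = a \<and> i mod l = b"
proof -
  have "\<exists>!x. x < r * l \<and> [x = a] (mod r) \<and> [x = b] (mod l)"
    by (rule binary_chinese_remainder_unique_nat[OF cop]) (use r_pos l_pos in auto)
  thus ?thesis using assms by (simp add: cong_def)
qed

lemma crt_props: assumes "a < r" "b < l" shows "crt a b < r * l" "crt a b mod r = a" "crt a b mod l = b"
  using theI'[OF crt_ex1[OF assms]] unfolding crt_def by auto

lemma crt_unique: assumes "i < r * l" shows "crt (i mod r) (i mod l) = i"
proof -
  have "i mod r < r" "i mod l < l" using r_pos l_pos by auto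
  from the1_equality[OF crt_ex1[OF this]] assms show ?thesis unfolding crt_def by auto
qed

lemma fold_val: "a < r \<Longrightarrow> b < l \<Longrightarrow> fold_arr r l s a b = s (crt a b)"
  by (simp add: fold_arr_def crt_def)

lemma fold_out: "\<not> (a < r \<and> b < l) \<Longrightarrow> fold_arr r l s a b = 0"
  by (auto simp add: fold_arr_def)

lemma fold_is_array: "is_array r l (fold_arr r l s)"
  by (simp add: is_array_def fold_arr_def)

definition per :: "(nat \<Rightarrow> bit) \<Rightarrow> bool" where
  "per s \<longleftrightarrow> (\<forall>j. s (j mod e) = s j)"

lemma per_sq: "per (sq f h)"
  unfolding per_def using sq_period_mod[OF e_props(2)] by blast

lemma r_dvd_e: "r dvd e" and l_dvd_e: "l dvd e" using e_eq by auto

lemma fold_shift: assumes "per s"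
  shows "fold_arr r l (shift_seq d s) = shift_arr r l (d mod r) (d mod l) (fold_arr r l s)"
proof (intro ext)
  fix a b
  show "fold_arr r l (shift_seq d s) a b = shift_arr r l (d mod r) (d mod l) (fold_arr r l s) a b"
  proof (cases "a < r \<and> b < l")
    case True
    let ?c = "crt a b"
    have c: "?c < r * l" "?c mod r = a" "?c mod l = b" using crt_props True by auto
    let ?c' = "(?c + d) mod e"
    have c'1: "?c' < r * l" using e_eq e_props(1) by simp
    have c'2: "?c' mod r = (a + d mod r) mod r"
    proof -
      have "?c' mod r = (?c + d) mod r" by (rule mod_mod_cancel[OF r_dvd_e])
      also have "\<dots> = (?c mod r + d mod r) mod r" by (simp add: mod_add_eq)
      finally show ?thesis using c by simp
    qed
    have c'3: "?c' mod l = (b + d mod l) mod l"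
    proof -
      have "?c' mod l = (?c + d) mod l" by (rule mod_mod_cancel[OF l_dvd_e])
      also have "\<dots> = (?c mod l + d mod l) mod l" by (simp add: mod_add_eq)
      finally show ?thesis using c by simp
    qed
    have "crt ((a + d mod r) mod r) ((b + d mod l) mod l) = ?c'"
      using crt_unique[OF c'1] c'2 c'3 by simp
    moreover have "(a + d mod r) mod r < r" "(b + d mod l) mod l < l" using r_pos l_pos by auto
    ultimately have "shift_arr r l (d mod r) (d mod l) (fold_arr r l s) a b = s ?c'"
      using True by (simp add: shift_arr_def fold_val)
    also have "\<dots> = s (?c + d)" using assms unfolding per_def by blast
    also have "\<dots> = fold_arr r l (shift_seq d s) a b" using True by (simp add: fold_val shift_seq_def)
    finally show ?thesis by simp
  next
    case False
    thus ?thesis by (auto simp add: fold_out shift_arr_def)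
  qed
qed

lemma window_shift: assumes "p < r" "q < l"
  shows "window r l n m A p q = window r l n m (shift_arr r l p q A) 0 0"
proof (intro ext)
  fix u v
  have "u mod r < r" "v mod l < l" using r_pos l_pos by auto
  moreover have "(u mod r + p) mod r = (p + u) mod r" by (simp add: mod_add_right_eq add.commute)
  moreover have "(v mod l + q) mod l = (q + v) mod l" by (simp add: mod_add_right_eq add.commute)
  ultimately show "window r l n m A p q u v = window r l n m (shift_arr r l p q A) 0 0 u v"
    by (simp add: window_def shift_arr_def)
qed

lemma add_fold: "add_arr (fold_arr r l s) (fold_arr r l t) = fold_arr r l (\<lambda>j. s j + t j)"
  by (intro ext) (simp add: add_arr_def fold_arr_def)

definition W :: "bit poly \<Rightarrow> nat \<Rightarrow> nat \<Rightarrow> bit" where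
  "W h = window r l n m (fold_arr r l (sq f h)) 0 0"

lemma W_val: "u < n \<Longrightarrow> v < m \<Longrightarrow> W h u v = sq f h (crt (u mod r) (v mod l))"
  using r_pos l_pos by (simp add: W_def window_def fold_val)

lemma W_out: "\<not> (u < n \<and> v < m) \<Longrightarrow> W h u v = 0"
  by (auto simp add: W_def window_def)

lemma W_add: "W (a + b) u v = W a u v + W b u v"
  by (cases "u < n \<and> v < m") (auto simp: W_val W_out sq_add)

lemma W_cong: "f dvd a - b \<Longrightarrow> W a = W b"
  unfolding W_def using sq_cong by metis

lemma W_is_array: "is_array n m (W h)"
  by (simp add: is_array_def W_out)

end


lemma bpoly_cancel: "(x::bit poly) + y + (x + z) = y + z"
proof -
  have "x + y + (x + z) = (x + x) + (y + z)" by (simp only: add_ac)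
  thus ?thesis by (simp only: bpoly_add_self add_0_left)
qed

lemma sum_symdiff: assumes fa: "finite A" and fb: "finite B"
  shows "sum (g :: nat \<Rightarrow> bit poly) A + sum g B = sum g ((A - B) \<union> (B - A))"
proof -
  have a: "sum g A = sum g (A \<inter> B) + sum g (A - B)" by (rule sum.Int_Diff[OF fa])
  have b: "sum g B = sum g (A \<inter> B) + sum g (B - A)" using sum.Int_Diff[OF fb, of g A] by (simp add: Int_commute)
  have c: "sum g ((A - B) \<union> (B - A)) = sum g (A - B) + sum g (B - A)"
    by (rule sum.union_disjoint) (use fa fb in auto)
  show ?thesis by (simp only: a b c bpoly_cancel)
qed

context prac_setup
begin

definition Rset :: "nat set" where "Rset = {i. i < r * l \<and> i mod r < n \<and> i mod l < m}"

lemma wp_R: "window_positions r l n m 0 0 = Rset"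
  by (auto simp: window_positions_def Rset_def simp flip: of_nat_mod)

lemma finite_R: "finite Rset" unfolding Rset_def by (rule finite_subset[of _ "{..<r * l}"]) auto

lemma card_R: "card Rset \<ge> n * m"
proof -
  let ?g = "\<lambda>(u, v). crt u v"
  have inj: "inj_on ?g ({..<n} \<times> {..<m})"
  proof (rule inj_onI, clarsimp)
    fix u v u' v' assume "u < n" "v < m" "u' < n" "v' < m" "crt u v = crt u' v'"
    moreover have "u < r" "u' < r" "v < l" "v' < l" using n_le_r m_le_l \<open>u < n\<close> \<open>v < m\<close> \<open>u' < n\<close> \<open>v' < m\<close> by auto
    ultimately show "u = u' \<and> v = v'" using crt_props by metis
  qed
  have sub: "?g ` ({..<n} \<times> {..<m}) \<subseteq> Rset"
  proof clarsimp
    fix u v assume "u < n" "v < m"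
    moreover have "u < r" "v < l" using n_le_r m_le_l \<open>u < n\<close> \<open>v < m\<close> by auto
    ultimately show "crt u v \<in> Rset" using crt_props unfolding Rset_def by auto
  qed
  have "n * m = card (?g ` ({..<n} \<times> {..<m}))" using card_image[OF inj] by (simp add: card_cartesian_product)
  also have "\<dots> \<le> card Rset" by (rule card_mono[OF finite_R sub])
  finally show ?thesis .
qed

definition Phi :: "nat set \<Rightarrow> bit poly" where "Phi Q = (\<Sum>i\<in>Q. monom 1 i) mod f"

lemma span: assumes gc: "\<not> f dvd g_poly Rset" and dg: "degree g < N"
  shows "\<exists>Q. Q \<subseteq> Rset \<and> g mod f = (\<Sum>i\<in>Q. monom 1 i) mod f"
proof -
  let ?K = "{g::bit poly. degree g < N}"
  have inj: "inj_on Phi (Pow Rset)"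
  proof (rule inj_onI, rule ccontr)
    fix Q1 Q2 assume q1: "Q1 \<in> Pow Rset" and q2: "Q2 \<in> Pow Rset" and eq: "Phi Q1 = Phi Q2" and ne: "Q1 \<noteq> Q2"
    have fq: "finite Q1" "finite Q2" using q1 q2 finite_R finite_subset by auto
    let ?D = "(Q1 - Q2) \<union> (Q2 - Q1)"
    have "f dvd (\<Sum>i\<in>Q1. monom 1 i) - (\<Sum>i\<in>Q2. monom 1 i)"
      using eq unfolding Phi_def using mod_eq_dvd_iff by blast
    hence d: "f dvd (\<Sum>i\<in>?D. monom 1 i)" by (simp only: bpoly_minus sum_symdiff[OF fq])
    have "?D \<in> {Q. Q \<subseteq> Rset \<and> Q \<noteq> {}}" using q1 q2 ne by auto
    moreover have "finite {Q. Q \<subseteq> Rset \<and> Q \<noteq> {}}" using finite_R by simp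
    ultimately have "(\<Sum>i\<in>?D. monom 1 i) dvd g_poly Rset" unfolding g_poly_def by (rule dvd_prodI[rotated])
    with d gc show False using dvd_trans by blast
  qed
  have fK: "finite ?K" using card_K0(2)[OF N1] .
  have sub: "Phi ` Pow Rset \<subseteq> ?K" unfolding Phi_def using mod_in_K0[OF N1] by auto
  have "card ?K = 2 ^ N" using card_K0(1)[OF N1] .
  also have "\<dots> \<le> 2 ^ card Rset" using card_R degf by simp
  also have "\<dots> = card (Phi ` Pow Rset)" using card_image[OF inj] card_Pow[OF finite_R] by simp
  finally have "Phi ` Pow Rset = ?K" using card_seteq[OF fK sub] by simp
  moreover have "g mod f \<in> ?K" using mod_in_K0[OF N1] by simp
  ultimately obtain Q where "Q \<subseteq> Rset" "g mod f = Phi Q" by (metis (no_types, lifting) PowD imageE)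
  thus ?thesis unfolding Phi_def by blast
qed

lemma Lf_mult_cong: "a mod f = b mod f \<Longrightarrow> Lf f (h * a) = Lf f (h * b)"
  by (rule Lf_cong) (metis dvd_mult mod_eq_dvd_iff right_diff_distrib)

lemma W_zero: assumes gc: "\<not> f dvd g_poly Rset" and z: "W h = (\<lambda>_ _. 0)" shows "f dvd h"
proof (rule Lf_all_dvd[OF irr N1])
  have sqR: "sq f h i = 0" if "i \<in> Rset" for i
  proof -
    have i: "i < r * l" "i mod r < n" "i mod l < m" using that unfolding Rset_def by auto
    have "W h (i mod r) (i mod l) = sq f h (crt (i mod r mod r) (i mod l mod l))" using W_val i by blast
    also have "\<dots> = sq f h i" using crt_unique[OF i(1)] by simp
    finally show ?thesis using z by metis
  qed
  fix g
  have "g mod f mod f = g mod f" by simp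
  have "degree (g mod f) < N" using mod_in_K0[OF N1] by simp
  then obtain Q where Q: "Q \<subseteq> Rset" "g mod f mod f = (\<Sum>i\<in>Q. monom 1 i) mod f" using span[OF gc] by blast
  have "Lf f (h * g) = Lf f (h * (\<Sum>i\<in>Q. monom 1 i))" using Q(2) by (intro Lf_mult_cong) simp
  also have "\<dots> = (\<Sum>i\<in>Q. sq f h i)" by (simp add: sum_distrib_left Lf_sum sq_def)
  also have "\<dots> = 0" using sqR Q(1) by (simp add: subset_iff)
  finally show "Lf f (h * g) = 0" .
qed

lemma W_inj: assumes gc: "\<not> f dvd g_poly Rset" and a: "degree a < N" and b: "degree b < N" and eq: "W a = W b"
  shows "a = b"
proof -
  have "W (a + b) = (\<lambda>_ _. 0)" by (intro ext) (simp add: W_add eq)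
  hence "f dvd a + b" by (rule W_zero[OF gc])
  thus ?thesis using K0_dvd_eq a b by (simp add: bpoly_minus)
qed

lemma W_surj: assumes gc: "\<not> f dvd g_poly Rset" and M: "is_array n m M"
  shows "\<exists>h. degree h < N \<and> W h = M"
proof -
  let ?K = "{g::bit poly. degree g < N}" and ?A = "{M. is_array n m M}"
  let ?B = "{..<n} \<times> {..<m}"
  let ?enc = "\<lambda>M. restrict (\<lambda>(u, v). M u v) ?B"
  have encinj: "inj_on ?enc ?A"
  proof (rule inj_onI)
    fix M1 M2 assume m1: "M1 \<in> ?A" and m2: "M2 \<in> ?A" and eq: "?enc M1 = ?enc M2"
    show "M1 = M2"
    proof (intro ext)
      fix u v show "M1 u v = M2 u v"
      proof (cases "u < n \<and> v < m")
        case True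
        hence "?enc M1 (u, v) = M1 u v" "?enc M2 (u, v) = M2 u v" by auto
        thus ?thesis using eq by metis
      next
        case False thus ?thesis using m1 m2 by (auto simp: is_array_def)
      qed
    qed
  qed
  have encsub: "?enc ` ?A \<subseteq> PiE ?B (\<lambda>_. UNIV)"
    by (intro image_subsetI) (simp add: PiE_iff restrict_extensional del: restrict_apply)
  have fP: "finite (PiE ?B (\<lambda>_. (UNIV :: bit set)))" by (rule finite_PiE) (auto simp: univ_bit)
  have cP: "card (PiE ?B (\<lambda>_. (UNIV :: bit set))) = 2 ^ (n * m)"
    by (simp add: card_PiE univ_bit card_cartesian_product numeral_2_eq_2)
  have fA: "finite ?A" using finite_imageD[OF finite_subset[OF encsub fP] encinj] .
  have cA: "card ?A \<le> 2 ^ N"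
    using card_image[OF encinj] card_mono[OF fP encsub] cP degf by simp
  have Winj: "inj_on W ?K" by (rule inj_onI) (use W_inj[OF gc] in auto)
  have Wsub: "W ` ?K \<subseteq> ?A" using W_is_array by auto
  have "card (W ` ?K) = 2 ^ N" using card_image[OF Winj] card_K0(1)[OF N1] by simp
  hence "W ` ?K = ?A" using card_seteq[OF fA Wsub] cA by simp
  thus ?thesis using M by (metis (no_types, lifting) imageE mem_Collect_eq)
qed

end


lemma bit_sum0: "(x::bit) + y = 0 \<Longrightarrow> x = y"
  using bit_cases2[of x] bit_cases2[of y] by auto

context prac_setup
begin

lemma shift_sq: "shift_seq d (sq f h) = sq f (h * monom 1 d)"
  by (intro ext) (simp add: shift_seq_def sq_shift)

lemma shift_mod: assumes "per s" shows "shift_seq d s = shift_seq (d mod e) s"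
proof (intro ext)
  fix j
  have "s (j + d) = s ((j + d) mod e)" using assms unfolding per_def by metis
  also have "(j + d) mod e = (j + d mod e) mod e" by (simp add: mod_add_right_eq)
  also have "s \<dots> = s (j + d mod e)" using assms unfolding per_def by metis
  finally show "shift_seq d s j = shift_seq (d mod e) s j" by (simp add: shift_seq_def)
qed

lemma uniq_shift_le: assumes h: "\<not> f dvd h" and d: "d1 \<le> d2" "d2 < e"
  and eq: "shift_seq d1 (sq f h) = shift_seq d2 (sq f h)" shows "d1 = d2"
proof (rule ccontr)
  assume ne: "d1 \<noteq> d2"
  define k where "k = d2 - d1"
  have k: "0 < k" "k < e" using d ne by (auto simp: k_def)
  have "f dvd h * monom 1 d1 - h * monom 1 d2"
    using eq by (simp add: shift_sq sq_inj[OF irr N1])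
  moreover have "h * monom 1 d1 - h * monom 1 d2 = monom 1 d1 * (h * (monom 1 k - 1))"
    using d by (simp add: k_def bpoly_minus algebra_simps mult_monom)
  ultimately have "f dvd monom 1 d1 * (h * (monom 1 k - 1))" by simp
  hence "f dvd h * (monom 1 k - 1)" using not_dvd_Xpow by blast
  hence "f dvd monom 1 k - 1" using prime_elem_dvd_multD[OF pr] h by blast
  thus False using e_min k by blast
qed

lemma uniq_shift: assumes h: "\<not> f dvd h" and d: "d1 < e" "d2 < e"
  and eq: "shift_seq d1 (sq f h) = shift_seq d2 (sq f h)" shows "d1 = d2"
  using uniq_shift_le[OF h _ d(2) eq] uniq_shift_le[OF h _ d(1) eq[symmetric]] by linarith

lemma W_zero0: "W 0 = (\<lambda>_ _. 0)"
  by (intro ext) (auto simp: W_def window_def fold_arr_def sq_dvd)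

theorem main:
  assumes gc: "\<forall>p<r. \<forall>q<l. \<not> f dvd g_poly (window_positions r l n m p q)"
    and S: "S \<subseteq> {s. lfsr_seq f s \<and> s \<noteq> (\<lambda>_. 0)}"
    and rep: "\<forall>t. lfsr_seq f t \<and> t \<noteq> (\<lambda>_. 0) \<longrightarrow> (\<exists>!s. s \<in> S \<and> (\<exists>d. t = shift_seq d s))"
  shows "is_PRAC r l n m (fold_arr r l ` S)"
proof -
  have gc0: "\<not> f dvd g_poly Rset" using gc r_pos l_pos wp_R by (metis less_one not_le not_gr0 le_less_trans zero_less_one)
  have S_repr: "\<exists>h. degree h < N \<and> s = sq f h \<and> \<not> f dvd h" if "s \<in> S" for s
  proof -
    have s: "lfsr_seq f s" "s \<noteq> (\<lambda>_. 0)" using S that by auto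
    obtain h where h: "degree h < N" "s = sq f h" using V_repr[OF irr N1 s(1)] by blast
    have "\<not> f dvd h"
    proof
      assume "f dvd h" hence "s = (\<lambda>_. 0)" using h by (auto simp: sq_dvd)
      thus False using s by simp
    qed
    thus ?thesis using h by blast
  qed
  have perS: "per s" if "s \<in> S" for s using S_repr[OF that] per_sq by blast
  have rep': "\<exists>s\<in>S. \<exists>d<e. t = shift_seq d s" if tl: "lfsr_seq f t" and tn: "t \<noteq> (\<lambda>_. 0)" for t
  proof -
    obtain s d where "s \<in> S" "t = shift_seq d s" using rep tl tn by blast
    moreover have "d mod e < e" using e_props(1) by simp
    ultimately show ?thesis using shift_mod[OF perS] by blast
  qed
  have close: "\<exists>B\<in>fold_arr r l ` S. \<exists>a<r. \<exists>b<l. fold_arr r l t = shift_arr r l a b B"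
    if tl: "lfsr_seq f t" and tn: "t \<noteq> (\<lambda>_. 0)" for t
  proof -
    obtain B d where B: "B \<in> S" "t = shift_seq d B" using rep'[OF tl tn] by blast
    have eq: "fold_arr r l t = shift_arr r l (d mod r) (d mod l) (fold_arr r l B)"
      using B fold_shift[OF perS[OF B(1)]] by simp
    have lt: "d mod r < r" "d mod l < l" using r_pos l_pos by auto
    show ?thesis
    proof (rule bexI[of _ "fold_arr r l B"])
      show "\<exists>a<r. \<exists>b<l. fold_arr r l t = shift_arr r l a b (fold_arr r l B)" using eq lt by blast
      show "fold_arr r l B \<in> fold_arr r l ` S" using B(1) by simp
    qed
  qed
  show ?thesis unfolding is_PRAC_def
  proof (intro conjI ballI allI impI)
    fix A assume "A \<in> fold_arr r l ` S" thus "is_array r l A" using fold_is_array by auto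
  next
    fix M assume M: "is_array n m M \<and> M \<noteq> (\<lambda>_ _. 0)"
    obtain h0 where h0: "degree h0 < N" "W h0 = M" using W_surj[OF gc0] M by blast
    have nd0: "\<not> f dvd h0"
    proof
      assume "f dvd h0"
      hence "h0 = 0" using K0_dvd_eq[of h0 f 0] h0 N1 by simp
      thus False using h0 M W_zero0 by simp
    qed
    let ?t = "sq f h0"
    have t: "lfsr_seq f ?t" "?t \<noteq> (\<lambda>_. 0)"
    proof -
      show "lfsr_seq f ?t" using lfsr_sq[OF N1] .
      show "?t \<noteq> (\<lambda>_. 0)"
      proof
        assume "?t = (\<lambda>_. 0)"
        hence "\<And>j. ?t j = 0" by simp
        thus False using nd0 sq_zero_dvd[OF irr N1, of h0] by blast
      qed
    qed
    obtain s d where sd: "s \<in> S" "d < e" "?t = shift_seq d s" using rep'[OF t] by blast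
    obtain hs where hs: "degree hs < N" "s = sq f hs" "\<not> f dvd hs" using S_repr[OF sd(1)] by blast
    let ?p = "d mod r" and ?q = "d mod l"
    have pq: "?p < r" "?q < l" using r_pos l_pos by auto
    let ?Set = "{(A, p, q). A \<in> fold_arr r l ` S \<and> p < r \<and> q < l \<and> window r l n m A p q = M}"
    have win: "window r l n m (fold_arr r l s') p' q' = window r l n m (fold_arr r l (shift_seq d' s')) 0 0"
      if "s' \<in> S" "p' < r" "q' < l" "d' mod r = p'" "d' mod l = q'" for s' p' q' d'
      using window_shift[OF that(2,3)] fold_shift[OF perS[OF that(1)], of d'] that(4,5) by simp
    have "?Set = {(fold_arr r l s, ?p, ?q)}"
    proof (intro equalityI subsetI)
      fix x assume "x \<in> {(fold_arr r l s, ?p, ?q)}"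
      moreover have "window r l n m (fold_arr r l s) ?p ?q = M"
        using win[OF sd(1) pq refl refl] sd(3) h0(2) by (simp add: W_def)
      ultimately show "x \<in> ?Set" using sd(1) pq by auto
    next
      fix x assume "x \<in> ?Set"
      then obtain s' p' q' where x: "x = (fold_arr r l s', p', q')" and s': "s' \<in> S" "p' < r" "q' < l"
        and wM: "window r l n m (fold_arr r l s') p' q' = M" by auto
      let ?d = "crt p' q'"
      have dprops: "?d < r * l" "?d mod r = p'" "?d mod l = q'" using crt_props s' by auto
      obtain h' where h': "degree h' < N" "s' = sq f h'" "\<not> f dvd h'" using S_repr[OF s'(1)] by blast
      let ?h2 = "h' * monom 1 ?d"
      have "W ?h2 = M" using win[OF s' dprops(2,3)] wM h'(2) by (simp add: W_def shift_sq)
      moreover have "f dvd ?h2 mod f - ?h2" using mod_eq_dvd_iff[of "?h2 mod f" f ?h2] by simp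
      ultimately have "W (?h2 mod f) = W h0" using W_cong[of "?h2 mod f" ?h2] h0(2) by simp
      hence "?h2 mod f = h0" using W_inj[OF gc0 mod_in_K0[OF N1] h0(1)] by blast
      moreover have "f dvd ?h2 - ?h2 mod f" using mod_eq_dvd_iff[of ?h2 f "?h2 mod f"] by simp
      ultimately have "sq f ?h2 = ?t" using sq_cong[of f ?h2 "?h2 mod f"] by simp
      hence t': "?t = shift_seq ?d s'" using h'(2) by (simp add: shift_sq)
      have u: "\<exists>!z. z \<in> S \<and> (\<exists>d. ?t = shift_seq d z)" using rep t by simp
      have "s' \<in> S \<and> (\<exists>d. ?t = shift_seq d s')" using s'(1) t' by blast
      moreover have "s \<in> S \<and> (\<exists>d. ?t = shift_seq d s)" using sd(1,3) by blast
      ultimately have "s' = s" using u by (metis (no_types, lifting))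
      hence "shift_seq ?d (sq f hs) = shift_seq d (sq f hs)" using t' sd(3) hs(2) by simp
      moreover have "?d < e" using dprops(1) e_eq by simp
      ultimately have "?d = d" using uniq_shift[OF hs(3)] sd(2) by blast
      thus "x \<in> {(fold_arr r l s, ?p, ?q)}" using x \<open>s' = s\<close> dprops by simp
    qed
    thus "card ?Set = 1" by simp
  next
    fix A A' assume A: "A \<in> fold_arr r l ` S" and A': "A' \<in> fold_arr r l ` S" and ne: "A \<noteq> A'"
    obtain s1 s2 where s: "s1 \<in> S" "s2 \<in> S" "A = fold_arr r l s1" "A' = fold_arr r l s2" using A A' by blast
    obtain h1 where h1: "s1 = sq f h1" using S_repr[OF s(1)] by blast
    obtain h2 where h2: "s2 = sq f h2" using S_repr[OF s(2)] by blast
    let ?t = "\<lambda>j. s1 j + s2 j"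
    have tq: "?t = sq f (h1 + h2)" using h1 h2 by (simp add: fun_eq_iff sq_add)
    have t1: "lfsr_seq f ?t" using tq lfsr_sq[OF N1] by simp
    have t2: "?t \<noteq> (\<lambda>_. 0)"
    proof
      assume "?t = (\<lambda>_. 0)"
      hence "\<And>j. s1 j + s2 j = 0" by metis
      hence "s1 = s2" using bit_sum0 by (intro ext) blast
      thus False using ne s by simp
    qed
    have "add_arr A A' = fold_arr r l ?t" using s add_fold by simp
    thus "\<exists>B\<in>fold_arr r l ` S. \<exists>a<r. \<exists>b<l. add_arr A A' = shift_arr r l a b B"
      using close[OF t1 t2] by simp
  next
    fix A a b assume A: "A \<in> fold_arr r l ` S" and ab: "a < r" "b < l" "(a, b) \<noteq> (0, 0)"
    obtain s where s: "s \<in> S" "A = fold_arr r l s" using A by blast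
    obtain h where h: "s = sq f h" "\<not> f dvd h" using S_repr[OF s(1)] by blast
    let ?c = "crt a b"
    have c: "?c < r * l" "?c mod r = a" "?c mod l = b" using crt_props ab by auto
    have shA: "shift_arr r l a b A = fold_arr r l (shift_seq ?c s)"
      using fold_shift[OF perS[OF s(1)], of ?c] c s(2) by simp
    let ?t = "\<lambda>j. s j + shift_seq ?c s j"
    have tq: "?t = sq f (h + h * monom 1 ?c)"
      using h by (simp add: fun_eq_iff sq_add shift_sq[symmetric] shift_seq_def)
    have t1: "lfsr_seq f ?t" using tq lfsr_sq[OF N1] by simp
    have t2: "?t \<noteq> (\<lambda>_. 0)"
    proof
      assume "?t = (\<lambda>_. 0)"
      hence "\<And>j. s j + s (j + ?c) = 0" unfolding shift_seq_def by metis
      hence "\<And>j. s (j + 0) = s (j + ?c)" by (metis bit_sum0 add_0_right)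
      hence "shift_seq 0 s = shift_seq ?c s" unfolding shift_seq_def by (intro ext) blast
      moreover have "?c < e" "0 < e" using c(1) e_eq e_props(1) by auto
      ultimately have "0 = ?c" using uniq_shift[OF h(2)] h(1) by blast
      hence "a = 0" "b = 0" using c by auto
      thus False using ab by simp
    qed
    have "add_arr A (shift_arr r l a b A) = fold_arr r l ?t" using s shA add_fold by simp
    thus "\<exists>B\<in>fold_arr r l ` S. \<exists>c<r. \<exists>d<l. add_arr A (shift_arr r l a b A) = shift_arr r l c d B"
      using close[OF t1 t2] by simp
  qed
qed

end

theorem theorem7:
  fixes n m l :: nat and f :: "bit poly"
  assumes "n \<ge> 1" and "m \<ge> 1"
    and "irreducible f" and "degree f = n * m" and "f \<noteq> [:0, 1:]"
    and "poly_exponent f = (2 ^ n - 1) * l"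
    and "coprime (2 ^ n - 1) l"
    and "\<forall>p < 2 ^ n - 1. \<forall>q < l.
           \<not> f dvd g_poly (window_positions (2 ^ n - 1) l n m p q)"
  shows "\<forall>S. (S \<subseteq> {s. lfsr_seq f s \<and> s \<noteq> (\<lambda>_. 0)} \<and>
              (\<forall>t. lfsr_seq f t \<and> t \<noteq> (\<lambda>_. 0) \<longrightarrow>
                   (\<exists>!s. s \<in> S \<and> (\<exists>d. t = shift_seq d s))))
            \<longrightarrow> is_PRAC (2 ^ n - 1) l n m (fold_arr (2 ^ n - 1) l ` S)"
proof (intro allI impI)
  fix S assume H: "S \<subseteq> {s. lfsr_seq f s \<and> s \<noteq> (\<lambda>_. 0)} \<and>
              (\<forall>t. lfsr_seq f t \<and> t \<noteq> (\<lambda>_. 0) \<longrightarrow>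
                   (\<exists>!s. s \<in> S \<and> (\<exists>d. t = shift_seq d s)))"
  interpret P: prac_setup n m l f "2 ^ n - 1"
    by unfold_locales (use assms in auto)
  show "is_PRAC (2 ^ n - 1) l n m (fold_arr (2 ^ n - 1) l ` S)"
    by (rule P.main) (use assms H in auto)
qed

end
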